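(* Assume $K_1\subseteq K_2\subseteq\cdots\subseteq K_n\subseteq\mathbb F_q$ are subfields. Let $\psi\in\mathrm{Aff}(\mathbb F_q^n)$ be given by $\boldsymbol\alpha\mapsto A\boldsymbol\alpha+\boldsymbol\beta$ with $A=(a_{ij})\in GL(n,\mathbb F_q)$ and $\boldsymbol\beta=(b_1,\dots,b_n)^T\in\mathbb F_q^n$. Then $\psi(\mathcal X)=\mathcal X$ (i.e.\ $\psi|_{\mathcal X}\in\mathrm{Aff}(\mathcal X)$) if and only if: (i) for all $i,j\in\{1,\dots,n\}$, $a_{ij}\in K_i$, $b_j\in K_j$, and $a_{ij}=0$ whenever $K_i\subsetneq K_j$; and (ii) for every maximal interval of indices $i\le j$ with $K_i=K_{i+1}=\cdots=K_j$ (i.e.\ $K_{i-1}\subsetneq K_i$ or $i=1$, and $K_j\subsetneq K_{j+1}$ or $j=n$), the square submatrix $(a_{uw})_{i\le u,w\le j}$ is invertible.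
   Context: $\mathcal X=K_1\times\cdots\times K_n\subseteq\mathbb F_q^n$. $\mathrm{Aff}(\mathbb F_q^n)$ is the group of maps $\boldsymbol\alpha\mapsto A\boldsymbol\alpha+\boldsymbol\beta$ with $A\in GL(n,\mathbb F_q)$, $\boldsymbol\beta\in\mathbb F_q^n$. $\mathrm{Aff}(\mathcal X)$ is the set of maps $\varphi:\mathcal X\to\mathcal X$ of the form $\varphi=\psi|_{\mathcal X}$ with $\psi\in\mathrm{Aff}(\mathbb F_q^n)$ and $\psi(\mathcal X)=\mathcal X$. *)

theory Defs
  imports Main
begin

definition subfield :: "'a::field set \<Rightarrow> bool" where
  "subfield K \<longleftrightarrow> 0 \<in> K \<and> 1 \<in> K \<and>
     (\<forall>x\<in>K. \<forall>y\<in>K. x + y \<in> K \<and> x * y \<in> K) \<and>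
     (\<forall>x\<in>K. - x \<in> K) \<and> (\<forall>x\<in>K. x \<noteq> 0 \<longrightarrow> inverse x \<in> K)"

text \<open>Vectors of F^n are functions nat => 'a indexed by {1..n}, zero outside.
  Matrices are functions nat => nat => 'a; only entries with indices in the
  relevant index set matter.\<close>
definition vecs :: "nat \<Rightarrow> (nat \<Rightarrow> 'a::zero) set" where
  "vecs n = {v. \<forall>i. i \<notin> {1..n} \<longrightarrow> v i = 0}"

definition prodset :: "nat \<Rightarrow> (nat \<Rightarrow> 'a::zero set) \<Rightarrow> (nat \<Rightarrow> 'a) set" where
  "prodset n K = {v \<in> vecs n. \<forall>i\<in>{1..n}. v i \<in> K i}"

definition affmap :: "nat \<Rightarrow> (nat \<Rightarrow> nat \<Rightarrow> 'a::comm_ring_1) \<Rightarrow> (nat \<Rightarrow> 'a) \<Rightarrow> (nat \<Rightarrow> 'a) \<Rightarrow> (nat \<Rightarrow> 'a)" where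
  "affmap n A b v = (\<lambda>i. if i \<in> {1..n} then (\<Sum>j=1..n. A i j * v j) + b i else 0)"

definition invertible_on :: "nat set \<Rightarrow> (nat \<Rightarrow> nat \<Rightarrow> 'a::comm_ring_1) \<Rightarrow> bool" where
  "invertible_on I A \<longleftrightarrow> (\<exists>B. \<forall>i\<in>I. \<forall>k\<in>I.
     (\<Sum>j\<in>I. A i j * B j k) = (if i = k then 1 else 0) \<and>
     (\<Sum>j\<in>I. B i j * A j k) = (if i = k then 1 else 0))"

end

theory Submission
  imports Defs "HOL-Library.FuncSet"
begin

definition mv :: "nat set \<Rightarrow> (nat \<Rightarrow> nat \<Rightarrow> 'a::comm_ring_1) \<Rightarrow> (nat \<Rightarrow> 'a) \<Rightarrow> nat \<Rightarrow> 'a" where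
  "mv I M v = (\<lambda>i. if i \<in> I then (\<Sum>j\<in>I. M i j * v j) else 0)"

definition supp :: "nat set \<Rightarrow> (nat \<Rightarrow> 'a::zero) set" where
  "supp I = {v. \<forall>i. i \<notin> I \<longrightarrow> v i = 0}"

lemma finite_supp:
  assumes "finite I"
  shows "finite (supp I :: (nat \<Rightarrow> 'a::{zero,finite}) set)"
proof -
  have "supp I \<subseteq> (\<lambda>f i. if i \<in> I then f i else (0::'a)) ` (Pi\<^sub>E I (\<lambda>_. UNIV))"
  proof
    fix v :: "nat \<Rightarrow> 'a" assume "v \<in> supp I"
    then have "v = (\<lambda>i. if i \<in> I then restrict v I i else 0)"
      by (auto simp: supp_def fun_eq_iff)
    moreover have "restrict v I \<in> Pi\<^sub>E I (\<lambda>_. UNIV)" by auto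
    ultimately show "v \<in> (\<lambda>f i. if i \<in> I then f i else (0::'a)) ` (Pi\<^sub>E I (\<lambda>_. UNIV))"
      by blast
  qed
  moreover have "finite (Pi\<^sub>E I (\<lambda>_. (UNIV::'a set)))"
    using assms by (intro finite_PiE) auto
  ultimately show ?thesis by (meson finite_imageI finite_subset)
qed

lemma mv_supp: "mv I M v \<in> supp I"
  by (simp add: mv_def supp_def)

lemma mv_diff: "mv I M (\<lambda>i. v i - w i) = (\<lambda>i. mv I M v i - mv I M w i)"
  by (auto simp: mv_def fun_eq_iff sum_subtractf algebra_simps)

lemma mv_left_inv:
  assumes "finite I"
    and inv: "\<forall>i\<in>I. \<forall>k\<in>I. (\<Sum>j\<in>I. B i j * M j k) = (if i = k then 1 else 0)"
    and v: "v \<in> supp I"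
  shows "mv I B (mv I M v) = v"
proof (rule ext)
  fix i
  show "mv I B (mv I M v) i = v i"
  proof (cases "i \<in> I")
    case False then show ?thesis using v by (simp add: mv_def supp_def)
  next
    case True
    have "mv I B (mv I M v) i = (\<Sum>j\<in>I. B i j * (\<Sum>l\<in>I. M j l * v l))"
      using True by (simp add: mv_def)
    also have "\<dots> = (\<Sum>j\<in>I. \<Sum>l\<in>I. B i j * M j l * v l)"
      by (simp add: sum_distrib_left mult.assoc)
    also have "\<dots> = (\<Sum>l\<in>I. \<Sum>j\<in>I. B i j * M j l * v l)"
      by (rule sum.swap)
    also have "\<dots> = (\<Sum>l\<in>I. (\<Sum>j\<in>I. B i j * M j l) * v l)"
      by (simp add: sum_distrib_right)
    also have "\<dots> = (\<Sum>l\<in>I. (if i = l then 1 else 0) * v l)"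
      using inv True by (intro sum.cong) auto
    also have "\<dots> = (\<Sum>l\<in>I. (if i = l then v l else 0))"
      by (intro sum.cong) auto
    also have "\<dots> = v i" using True assms(1) by simp
    finally show ?thesis .
  qed
qed

lemma inj_from_inv:
  assumes "finite I" "invertible_on I M"
  shows "inj_on (mv I M) (supp I)"
proof -
  obtain B where B: "\<forall>i\<in>I. \<forall>k\<in>I. (\<Sum>j\<in>I. B i j * M j k) = (if i = k then 1 else 0)"
    using assms(2) unfolding invertible_on_def by blast
  show ?thesis
    by (rule inj_on_inverseI[where g = "mv I B"]) (rule mv_left_inv[OF assms(1) B])
qed

lemma invariant_surj:
  assumes "finite I" "inj_on (mv I M) (supp I)" "S \<subseteq> I"
    and z: "\<forall>i\<in>I. \<forall>j\<in>S. i \<notin> S \<longrightarrow> M i j = 0"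
  shows "mv I M ` supp S = (supp S :: (nat \<Rightarrow> 'a::{comm_ring_1,finite}) set)"
proof (rule endo_inj_surj)
  show "finite (supp S :: (nat \<Rightarrow> 'a) set)"
    using assms by (intro finite_supp) (auto intro: finite_subset)
  have sub: "supp S \<subseteq> supp I" using assms(3) by (auto simp: supp_def)
  show "inj_on (mv I M) (supp S)" using inj_on_subset[OF assms(2) sub] .
  show "mv I M ` supp S \<subseteq> supp S"
  proof safe
    fix v :: "nat \<Rightarrow> 'a" assume v: "v \<in> supp S"
    show "mv I M v \<in> supp S"
      unfolding supp_def
    proof (intro CollectI allI impI)
      fix i assume i: "i \<notin> S"
      show "mv I M v i = 0"
      proof (cases "i \<in> I")
        case True
        have "(\<Sum>j\<in>I. M i j * v j) = 0"
          proof (rule sum.neutral, intro ballI)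
          fix j assume j: "j \<in> I"
          show "M i j * v j = 0"
          proof (cases "j \<in> S")
            case True then show ?thesis using z i \<open>i \<in> I\<close> by simp
          next
            case False then show ?thesis using v by (simp add: supp_def)
          qed
        qed
        then show ?thesis using True by (simp add: mv_def)
      qed (simp add: mv_def)
    qed
  qed
qed

lemma inj_to_invertible:
  assumes fin: "finite I" and inj: "inj_on (mv I M) (supp I)"
  shows "invertible_on I (M :: nat \<Rightarrow> nat \<Rightarrow> 'a::{field,finite})"
proof -
  define e where "e = (\<lambda>k::nat. \<lambda>i::nat. if i = k then (1::'a) else 0)"
  have surj: "mv I M ` supp I = supp I"
    using invariant_surj[OF fin inj] by auto
  have ex: "\<exists>v. v \<in> supp I \<and> mv I M v = e k" if "k \<in> I" for k
  proof -
    have "e k \<in> supp I" using that by (auto simp: supp_def e_def)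
    then show ?thesis using surj by (metis imageE)
  qed
  define V where "V = (\<lambda>k. SOME v. v \<in> supp I \<and> mv I M v = e k)"
  have V: "V k \<in> supp I \<and> mv I M (V k) = e k" if "k \<in> I" for k
    unfolding V_def using someI_ex[OF ex[OF that]] .
  define B where "B = (\<lambda>j k. V k j)"
  have R: "\<forall>i\<in>I. \<forall>k\<in>I. (\<Sum>j\<in>I. M i j * B j k) = (if i = k then 1 else 0)"
  proof (intro ballI)
    fix i k assume i: "i \<in> I" and k: "k \<in> I"
    have "(\<Sum>j\<in>I. M i j * B j k) = mv I M (V k) i" using i by (simp add: mv_def B_def)
    also have "\<dots> = e k i" using V[OF k] by simp
    finally show "(\<Sum>j\<in>I. M i j * B j k) = (if i = k then 1 else 0)" by (simp add: e_def)
  qed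
  have L: "\<forall>i\<in>I. \<forall>k\<in>I. (\<Sum>j\<in>I. B i j * M j k) = (if i = k then 1 else 0)"
  proof (intro ballI)
    fix i k assume i: "i \<in> I" and k: "k \<in> I"
    have ek: "e k \<in> supp I" using k by (auto simp: supp_def e_def)
    define u where "u = mv I B (mv I M (e k))"
    have "mv I M u = mv I M (e k)"
      unfolding u_def by (rule mv_left_inv[OF fin R mv_supp])
    then have "u = e k" using inj ek mv_supp[of I B] unfolding u_def
      by (auto dest: inj_onD)
    moreover have "mv I M (e k) j = M j k" if "j \<in> I" for j
    proof -
      have "mv I M (e k) j = (\<Sum>l\<in>I. if l = k then M j l else 0)"
        using that by (simp add: mv_def e_def if_distrib cong: if_cong)
      also have "\<dots> = M j k" using fin k by simp
      finally show ?thesis .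
    qed
    then have "u i = (\<Sum>j\<in>I. B i j * M j k)" using i by (simp add: u_def mv_def)
    ultimately show "(\<Sum>j\<in>I. B i j * M j k) = (if i = k then 1 else 0)"
      by (simp add: e_def)
  qed
  show ?thesis unfolding invertible_on_def using R L by blast
qed

lemma block_inv:
  assumes fin: "finite I" and inj: "inj_on (mv I A) (supp I)"
    and MI: "Mb \<subseteq> I" and UI: "U \<subseteq> I" and disj: "Mb \<inter> U = {}"
    and zU: "\<forall>i\<in>I. \<forall>j\<in>U. i \<notin> U \<longrightarrow> A i j = 0"
    and zM: "\<forall>i\<in>I. \<forall>j\<in>Mb. i \<notin> Mb \<union> U \<longrightarrow> A i j = 0"
  shows "invertible_on Mb (A :: nat \<Rightarrow> nat \<Rightarrow> 'a::{field,finite})"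
proof (rule inj_to_invertible)
  show finM: "finite Mb" using fin MI by (rule finite_subset[rotated])
  have surjU: "mv I A ` supp U = supp U"
    by (rule invariant_surj[OF fin inj UI zU])
  show "inj_on (mv Mb A) (supp Mb)"
  proof (rule inj_onI)
    fix v w :: "nat \<Rightarrow> 'a" assume v: "v \<in> supp Mb" and w: "w \<in> supp Mb"
      and eq: "mv Mb A v = mv Mb A w"
    define d where "d = (\<lambda>i. v i - w i)"
    have dM: "d \<in> supp Mb" using v w by (simp add: supp_def d_def)
    have dI: "d \<in> supp I" using dM MI by (auto simp: supp_def)
    have d0: "mv Mb A d = (\<lambda>i. 0)" unfolding d_def mv_diff eq by simp
    have "mv I A d \<in> supp U"
      unfolding supp_def
    proof (intro CollectI allI impI)
      fix i assume iU: "i \<notin> U"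
      show "mv I A d i = 0"
      proof (cases "i \<in> I")
        case True
        have "(\<Sum>j\<in>I. A i j * d j) = (\<Sum>j\<in>Mb. A i j * d j)"
          by (rule sum.mono_neutral_right[OF fin MI]) (use dM in \<open>auto simp: supp_def\<close>)
        also have "\<dots> = 0"
        proof (cases "i \<in> Mb")
          case True
          then show ?thesis using fun_cong[OF d0, of i] by (simp add: mv_def)
        next
          case False
          then show ?thesis using zM \<open>i \<in> I\<close> iU by simp
        qed
        finally show ?thesis using True by (simp add: mv_def)
      qed (simp add: mv_def)
    qed
    then obtain u where u: "u \<in> supp U" "mv I A u = mv I A d"
      using surjU by (metis imageE)
    have "u \<in> supp I" using u(1) UI by (auto simp: supp_def)
    then have "u = d" using inj u(2) dI by (meson inj_onD)
    then have "\<forall>i. d i = 0" using u(1) dM disj by (auto simp: supp_def)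
    then show "v = w" by (auto simp: d_def fun_eq_iff)
  qed
qed

lemma subfield_sum:
  assumes "subfield K" "finite S" "\<forall>j\<in>S. f j \<in> K"
  shows "sum f S \<in> K"
  using assms(2,3)
proof (induction S rule: finite_induct)
  case empty then show ?case using assms(1) by (simp add: subfield_def)
next
  case (insert x F) then show ?case using assms(1) by (simp add: subfield_def)
qed

lemma vecs_supp: "vecs n = supp {1..n}"
  by (simp add: vecs_def supp_def)

lemma affmap_mv: "b \<in> vecs n \<Longrightarrow> affmap n A b v = (\<lambda>i. mv {1..n} A v i + b i)"
  by (auto simp: affmap_def mv_def vecs_def fun_eq_iff)

lemma chain_mono:
  assumes chain: "\<forall>i. 1 \<le> i \<and> i < n \<longrightarrow> K i \<subseteq> K (Suc i)"
    and "1 \<le> r" "r \<le> s" "s \<le> n"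
  shows "K r \<subseteq> K s"
proof -
  have "\<And>d. r + d \<le> n \<Longrightarrow> K r \<subseteq> K (r + d)"
  proof -
    fix d show "r + d \<le> n \<Longrightarrow> K r \<subseteq> K (r + d)"
    proof (induction d)
      case 0 then show ?case by simp
    next
      case (Suc d)
      then have "K r \<subseteq> K (r + d)" by simp
      also have "\<dots> \<subseteq> K (Suc (r + d))" using chain Suc.prems assms(2) by simp
      finally show ?case by simp
    qed
  qed
  from this[of "s - r"] assms show ?thesis by simp
qed

theorem mainTheorem7:
  fixes n :: nat
    and K :: "nat \<Rightarrow> ('a::{field,finite}) set"
    and A :: "nat \<Rightarrow> nat \<Rightarrow> 'a"
    and b :: "nat \<Rightarrow> 'a"
  assumes subf: "\<forall>i\<in>{1..n}. subfield (K i)"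
    and chain: "\<forall>i. 1 \<le> i \<and> i < n \<longrightarrow> K i \<subseteq> K (Suc i)"
    and GL: "invertible_on {1..n} A"
    and bvec: "b \<in> vecs n"
  shows "affmap n A b ` prodset n K = prodset n K \<longleftrightarrow>
    ((\<forall>i\<in>{1..n}. \<forall>j\<in>{1..n}. A i j \<in> K i \<and> b j \<in> K j \<and>
        (K i \<subset> K j \<longrightarrow> A i j = 0)) \<and>
     (\<forall>i j. 1 \<le> i \<and> i \<le> j \<and> j \<le> n \<and> (\<forall>k\<in>{i..j}. K k = K i) \<and>
        (i = 1 \<or> K (i - 1) \<subset> K i) \<and> (j = n \<or> K j \<subset> K (Suc j))
        \<longrightarrow> invertible_on {i..j} A))"
proof -
  let ?I = "{1..n::nat}"
  let ?X = "prodset n K"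
  let ?f = "affmap n A b"
  have inj: "inj_on (mv ?I A) (supp ?I)" by (rule inj_from_inv[OF _ GL]) simp
  have injf: "inj_on ?f ?X"
  proof (rule inj_onI)
    fix v w assume v: "v \<in> ?X" and w: "w \<in> ?X" and eq: "?f v = ?f w"
    have "mv ?I A v = mv ?I A w"
      using eq unfolding affmap_mv[OF bvec] by (auto simp: fun_eq_iff dest: fun_cong)
    moreover have "v \<in> supp ?I" "w \<in> supp ?I"
      using v w by (auto simp: prodset_def vecs_supp)
    ultimately show "v = w" using inj by (meson inj_onD)
  qed
  have finX: "finite ?X"
  proof (rule finite_subset)
    show "?X \<subseteq> supp ?I" by (auto simp: prodset_def vecs_supp)
    show "finite (supp ?I :: (nat \<Rightarrow> 'a) set)" by (rule finite_supp) simp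
  qed
  have fv: "?f v i = (\<Sum>j\<in>?I. A i j * v j) + b i" if "i \<in> ?I" for v i
    using that by (simp add: affmap_def)
  have mono: "K r \<subseteq> K s" if "1 \<le> r" "r \<le> s" "s \<le> n" for r s
    using chain_mono[OF chain that] .
  define C1 where "C1 = (\<forall>i\<in>{1..n}. \<forall>j\<in>{1..n}. A i j \<in> K i \<and> b j \<in> K j \<and>
        (K i \<subset> K j \<longrightarrow> A i j = 0))"
  define P2 where "P2 = (\<forall>i j. 1 \<le> i \<and> i \<le> j \<and> j \<le> n \<and> (\<forall>k\<in>{i..j}. K k = K i) \<and>
        (i = 1 \<or> K (i - 1) \<subset> K i) \<and> (j = n \<or> K j \<subset> K (Suc j))
        \<longrightarrow> invertible_on {i..j} A)"
  have C2: P2 if c1: C1 unfolding P2_def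
  proof (intro allI impI)
    fix i j assume h: "1 \<le> i \<and> i \<le> j \<and> j \<le> n \<and> (\<forall>k\<in>{i..j}. K k = K i) \<and>
        (i = 1 \<or> K (i - 1) \<subset> K i) \<and> (j = n \<or> K j \<subset> K (Suc j))"
    from h have h1: "1 \<le> i" and h2: "i \<le> j" and h3: "j \<le> n"
      and h4: "\<forall>k\<in>{i..j}. K k = K i" and h5: "i = 1 \<or> K (i - 1) \<subset> K i"
      and h6: "j = n \<or> K j \<subset> K (Suc j)" by blast+
    show "invertible_on {i..j} A"
    proof (rule block_inv[OF _ inj, where U = "{Suc j..n}"])
      show "\<forall>r\<in>?I. \<forall>s\<in>{Suc j..n}. r \<notin> {Suc j..n} \<longrightarrow> A r s = 0"
      proof (intro ballI impI)
        fix r s assume r: "r \<in> ?I" and s: "s \<in> {Suc j..n}" and rs: "r \<notin> {Suc j..n}"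
        have "j \<noteq> n" using s by auto
        then have "K j \<subset> K (Suc j)" using h6 by blast
        moreover have "K r \<subseteq> K j" using r rs h3 by (intro mono) auto
        moreover have "K (Suc j) \<subseteq> K s" using s by (intro mono) auto
        ultimately have "K r \<subset> K s" by blast
        then show "A r s = 0" using c1 r s unfolding C1_def by auto
      qed
      show "\<forall>r\<in>?I. \<forall>s\<in>{i..j}. r \<notin> {i..j} \<union> {Suc j..n} \<longrightarrow> A r s = 0"
      proof (intro ballI impI)
        fix r s assume r: "r \<in> ?I" and s: "s \<in> {i..j}" and rs: "r \<notin> {i..j} \<union> {Suc j..n}"
        have ri: "r < i" using rs r h3 by auto
        then have "i \<noteq> 1" using r by auto
        then have "K (i - 1) \<subset> K i" using h5 by blast
        moreover have "K r \<subseteq> K (i - 1)" using r ri h2 h3 by (intro mono) auto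
        moreover have "K s = K i" using s h4 by blast
        ultimately have "K r \<subset> K s" by blast
        moreover have "s \<in> ?I" using s h1 h3 by auto
        ultimately show "A r s = 0" using c1 r unfolding C1_def by blast
      qed
    qed (use h1 h2 h3 in auto)
  qed
  have KI: "subfield (K i)" if "i \<in> ?I" for i using subf that by blast
  have fwd: C1 if eqX: "?f ` ?X = ?X"
  proof -
    have fX: "?f v \<in> ?X" if "v \<in> ?X" for v using eqX that by blast
    define e where "e = (\<lambda>c j. \<lambda>i::nat. if i = j then c else (0::'a))"
    have eX: "e c j \<in> ?X" if "j \<in> ?I" "c \<in> K j" for c j
      using that KI by (auto simp: e_def prodset_def vecs_def subfield_def)
    have zX: "(\<lambda>_. 0) \<in> ?X" using KI by (auto simp: prodset_def vecs_def subfield_def)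
    have fe: "?f (e c j) i = A i j * c + b i" if "i \<in> ?I" "j \<in> ?I" for c i j
    proof -
      have "(\<Sum>l\<in>?I. A i l * e c j l) = (\<Sum>l\<in>?I. if l = j then A i j * c else 0)"
        by (intro sum.cong) (auto simp: e_def)
      then show ?thesis using fv[OF that(1)] that by simp
    qed
    have inX: "?f v i \<in> K i" if "v \<in> ?X" "i \<in> ?I" for v i
      using fX[OF that(1)] that(2) by (auto simp: prodset_def)
    have bK: "b i \<in> K i" if "i \<in> ?I" for i
      using inX[OF zX that] fv[OF that, of "\<lambda>_. 0"] by simp
    have AcK: "A i j * c \<in> K i" if "i \<in> ?I" "j \<in> ?I" "c \<in> K j" for i j c
    proof -
      have "A i j * c + b i \<in> K i" using inX[OF eX[OF that(2,3)] that(1)] fe[OF that(1,2)] by simp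
      moreover have "- b i \<in> K i" using bK[OF that(1)] KI[OF that(1)] by (simp add: subfield_def)
      ultimately have "(A i j * c + b i) + - b i \<in> K i" using KI[OF that(1)] unfolding subfield_def by blast
      then show ?thesis by simp
    qed
    show C1 unfolding C1_def
    proof (intro ballI conjI impI)
      fix i j assume i: "i \<in> ?I" and j: "j \<in> ?I"
      show "b j \<in> K j" using bK j .
      have "1 \<in> K j" using KI[OF j] by (simp add: subfield_def)
      from AcK[OF i j this] show "A i j \<in> K i" by simp
      assume ss: "K i \<subset> K j"
      show "A i j = 0"
      proof (rule ccontr)
        assume nz: "A i j \<noteq> 0"
        have "K j \<subseteq> K i"
        proof
          fix c assume c: "c \<in> K j"
          have "inverse (A i j) \<in> K i" using nz AcK[OF i j \<open>1 \<in> K j\<close>] KI[OF i]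
            by (simp add: subfield_def)
          then have "inverse (A i j) * (A i j * c) \<in> K i" using AcK[OF i j c] KI[OF i]
            by (simp add: subfield_def)
          then show "c \<in> K i" using nz by (simp add: mult.assoc[symmetric])
        qed
        then show False using ss by blast
      qed
    qed
  qed
  have bwd: "?f ` ?X = ?X" if c1: C1
  proof (rule endo_inj_surj[OF finX _ injf])
    show "?f ` ?X \<subseteq> ?X"
    proof safe
      fix v assume v: "v \<in> ?X"
      show "?f v \<in> ?X" unfolding prodset_def
      proof (intro CollectI conjI ballI)
        show "?f v \<in> vecs n" by (simp add: affmap_def vecs_def)
        fix i assume i: "i \<in> ?I"
        have terms: "A i j * v j \<in> K i" if j: "j \<in> ?I" for j
        proof (cases "A i j = 0")
          case True then show ?thesis using KI[OF i] by (simp add: subfield_def)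
        next
          case False
          then have nss: "\<not> K i \<subset> K j" using c1 i j unfolding C1_def by blast
          have "K j \<subseteq> K i"
          proof (cases "i \<le> j")
            case True
            then have "K i \<subseteq> K j" using i j by (intro mono) auto
            then show ?thesis using nss by blast
          next
            case False then show ?thesis using i j by (intro mono) auto
          qed
          moreover have "v j \<in> K j" using v j by (auto simp: prodset_def)
          moreover have "A i j \<in> K i" using c1 i j unfolding C1_def by blast
          ultimately show ?thesis using KI[OF i] by (auto simp: subfield_def)
        qed
        have "(\<Sum>j\<in>?I. A i j * v j) \<in> K i"
          by (rule subfield_sum[OF KI[OF i]]) (use terms in auto)
        moreover have "b i \<in> K i" using c1 i unfolding C1_def by blast
        ultimately show "?f v i \<in> K i" using fv[OF i] KI[OF i] by (simp add: subfield_def)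
      qed
    qed
  qed
  show ?thesis unfolding C1_def[symmetric] P2_def[symmetric] using fwd bwd C2 by blast
qed

end
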